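(* Let $k\ge 3$ and let $G=(V,E)$ be a $k$-uniform hm-bipartite hypergraph with adjacency tensor $\mathcal A$. Then the spectrum of $\mathcal A$ is invariant under multiplication by any $k$-th root of unity: for every $\alpha\in\mathbb C$ with $\alpha^k=1$ and every $\lambda\in\mathbb C$, $\lambda$ is an eigenvalue of $\mathcal A$ if and only if $\alpha\lambda$ is, and they have the same algebraic multiplicity.
   Context: A $k$-uniform hypergraph $G=(V,E)$ has vertex set $V=[n]=\{1,\dots,n\}$ ($n\ge k$) and edge set $E$ consisting of $k$-element subsets of $V$. For $i\in V$, $E_i=\{e\in E: i\in e\}$ and $d_i=|E_i|$ is the degree of $i$. The adjacency tensor $\mathcal A=(a_{i_1\dots i_k})$ is the order-$k$, dimension-$n$ tensor with $a_{i_1\dots i_k}=\frac{1}{(k-1)!}$ if $\{i_1,\dots,i_k\}\in E$ and $0$ otherwise. For a tensor $\mathcal T=(t_{i_1\dots i_k})$ and $\mathbf x\in\mathbb C^n$, $\mathcal T\mathbf x^{k-1}\in\mathbb C^n$ has $i$-th entry $\sum_{i_2,\dots,i_k\in[n]}t_{ii_2\dots i_k}x_{i_2}\cdots x_{i_k}$; in particular $(\mathcal A\mathbf x^{k-1})_i=\sum_{e\in E_i}\prod_{j\in e\setminus\{i\}}x_j$. $\mathcal I$ denotes the identity tensor ($1$ exactly on the diagonal $i_1=\dots=i_k$). $\lambda\in\mathbb C$ is an eigenvalue of $\mathcal T$ with eigenvector $\mathbf x\in\mathbb C^n\setminus\{0\}$ if $(\lambda\mathcal I-\mathcal T)\mathbf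 x^{k-1}=0$, i.e. $(\mathcal T\mathbf x^{k-1})_i=\lambda x_i^{k-1}$ for all $i$. The characteristic polynomial is $\chi_{\mathcal T}(\lambda)=\mathrm{Det}(\lambda\mathcal I-\mathcal T)$, where $\mathrm{Det}$ is the tensor determinant (the resultant of the polynomial system $\mathcal T\mathbf x^{k-1}=0$, normalized so $\mathrm{Det}(\mathcal I)=1$); it is monic of degree $n(k-1)^{n-1}$, its roots are exactly the eigenvalues, and the algebraic multiplicity of an eigenvalue is its multiplicity as a root. The spectrum is the multiset of roots. $G$ is hm-bipartite if either $E=\emptyset$ or there is a partition $V=V_1\cup V_2$ with $V_1,V_2\neq\emptyset$ such that every edge $e\in E$ satisfies $|e\cap V_1|=1$ (and hence $|e\cap V_2|=k-1$). *)

theory Defs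
  imports Complex_Main "HOL-Computational_Algebra.Polynomial" "HOL-Combinatorics.Permutations"
begin

definition uniform_hypergraph :: "nat \<Rightarrow> nat \<Rightarrow> nat set set \<Rightarrow> bool" where
  "uniform_hypergraph n k E \<longleftrightarrow> n \<ge> k \<and> (\<forall>e\<in>E. e \<subseteq> {1..n} \<and> card e = k)"

definition hm_bipartite :: "nat \<Rightarrow> nat set set \<Rightarrow> bool" where
  "hm_bipartite n E \<longleftrightarrow> E = {} \<or>
     (\<exists>V1 V2. V1 \<union> V2 = {1..n} \<and> V1 \<inter> V2 = {} \<and> V1 \<noteq> {} \<and> V2 \<noteq> {} \<and>
              (\<forall>e\<in>E. card (e \<inter> V1) = 1))"

text \<open>A tensor of order k, dimension n is a function on index lists (i_1,...,i_k) with
  entries in {1..n}; only its values on such lists matter.\<close>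

type_synonym tensor = "nat list \<Rightarrow> complex"

definition adj_tensor :: "nat \<Rightarrow> nat set set \<Rightarrow> tensor" where
  "adj_tensor k E = (\<lambda>is. if length is = k \<and> set is \<in> E then 1 / of_nat (fact (k - 1)) else 0)"

definition index_lists :: "nat \<Rightarrow> nat \<Rightarrow> nat list set" where
  "index_lists n m = {is. length is = m \<and> set is \<subseteq> {1..n}}"

definition tensor_apply :: "nat \<Rightarrow> nat \<Rightarrow> tensor \<Rightarrow> (nat \<Rightarrow> complex) \<Rightarrow> nat \<Rightarrow> complex" where
  "tensor_apply n k T x i = (\<Sum>is\<in>index_lists n (k - 1). T (i # is) * prod_list (map x is))"

definition is_eigenvalue :: "nat \<Rightarrow> nat \<Rightarrow> tensor \<Rightarrow> complex \<Rightarrow> bool" where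
  "is_eigenvalue n k T lam \<longleftrightarrow>
     (\<exists>x :: nat \<Rightarrow> complex. (\<exists>j\<in>{1..n}. x j \<noteq> 0) \<and>
        (\<forall>i\<in>{1..n}. tensor_apply n k T x i = lam * x i ^ (k - 1)))"

definition monomials :: "nat \<Rightarrow> nat \<Rightarrow> (nat \<Rightarrow> nat) set" where
  "monomials n D = {a. (\<forall>j. j \<notin> {1..n} \<longrightarrow> a j = 0) \<and> sum a {1..n} = D}"

definition tensor_coeff :: "nat \<Rightarrow> nat \<Rightarrow> tensor \<Rightarrow> nat \<Rightarrow> (nat \<Rightarrow> nat) \<Rightarrow> complex" where
  "tensor_coeff n k T i g =
     (\<Sum>is\<in>{is\<in>index_lists n (k - 1). (\<lambda>j. count_list is j) = g}. T (i # is))"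

definition det_on :: "'a set \<Rightarrow> ('a \<Rightarrow> 'a \<Rightarrow> 'b::comm_ring_1) \<Rightarrow> 'b" where
  "det_on S M = (\<Sum>p\<in>{p. p permutes S}. of_int (sign p) * (\<Prod>a\<in>S. M a (p a)))"

text \<open>Macaulay matrix (in degree D = n(d-1)+1, d = k-1) of the system
  F_i = lambda x_i^d - (T x^d)_i, with coefficients in C[lambda].
  The row of a monomial x^a is (x^a / x_i^d) F_i, where i is the least index with x_i^d | x^a.\<close>
definition mac_sel :: "nat \<Rightarrow> nat \<Rightarrow> (nat \<Rightarrow> nat) \<Rightarrow> nat" where
  "mac_sel n d a = (LEAST i. i \<in> {1..n} \<and> d \<le> a i)"

definition mac_reduced :: "nat \<Rightarrow> nat \<Rightarrow> (nat \<Rightarrow> nat) \<Rightarrow> bool" where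
  "mac_reduced n d a \<longleftrightarrow> card {i\<in>{1..n}. d \<le> a i} = 1"

definition mac_entry :: "nat \<Rightarrow> nat \<Rightarrow> tensor \<Rightarrow> (nat \<Rightarrow> nat) \<Rightarrow> (nat \<Rightarrow> nat) \<Rightarrow> complex poly" where
  "mac_entry n k T a b =
     (let d = k - 1; i = mac_sel n d a; a' = a(i := a i - d) in
        (if a = b then [:0, 1:] else 0) -
        (if (\<forall>j. a' j \<le> b j) then [: tensor_coeff n k T i (\<lambda>j. b j - a' j) :] else 0))"

text \<open>chi_T(lambda) = Det(lambda I - T) = D_n / D_n' (Macaulay).\<close>
definition char_poly_tensor :: "nat \<Rightarrow> nat \<Rightarrow> tensor \<Rightarrow> complex poly" where
  "char_poly_tensor n k T =
     (let d = k - 1; S = monomials n (n * (d - 1) + 1) in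
        det_on S (mac_entry n k T) div det_on {a\<in>S. \<not> mac_reduced n d a} (mac_entry n k T))"

end

theory Submission
  imports Defs
begin

lemma pcompose_lin_div:
  fixes P Q :: "complex poly"
  assumes "\<alpha> \<noteq> 0"
  shows "pcompose (P div Q) [:0, \<alpha>:] = pcompose P [:0, \<alpha>:] div pcompose Q [:0, \<alpha>:]"
proof (cases "Q = 0")
  case True then show ?thesis by simp
next
  case False
  let ?L = "[:0, \<alpha>:]"
  have dL: "degree ?L = 1" using assms by simp
  have eq: "P = (P div Q) * Q + P mod Q" by simp
  have "pcompose P ?L = pcompose (P div Q) ?L * pcompose Q ?L + pcompose (P mod Q) ?L"
    by (metis eq pcompose_add pcompose_mult)
  moreover have "pcompose (P mod Q) ?L div pcompose Q ?L = 0"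
  proof (cases "P mod Q = 0")
    case True then show ?thesis by simp
  next
    case f: False
    have "degree (P mod Q) < degree Q" using degree_mod_less'[OF False f] .
    then show ?thesis using assms by (intro div_poly_less) (simp add: degree_pcompose dL)
  qed
  moreover have "pcompose Q ?L \<noteq> 0" using False
    using pcompose_eq_0[of Q ?L] dL by auto
  ultimately show ?thesis by simp
qed

lemma pcompose_power_left: "pcompose (p ^ m) r = (pcompose p r) ^ m"
  by (induction m) (simp_all add: pcompose_1 pcompose_mult)

lemma dvd_pcompose: "p dvd q \<Longrightarrow> pcompose p r dvd pcompose q r"
  by (metis dvdE dvd_triv_left pcompose_mult)

lemma order_pcompose_lin:
  fixes p :: "complex poly"
  assumes "\<alpha> \<noteq> 0"
  shows "order a (pcompose p [:0, \<alpha>:]) = order (\<alpha> * a) p"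
proof -
  have key: "[:-a, 1:] ^ m dvd pcompose p [:0, \<alpha>:] \<longleftrightarrow> [:-(\<alpha>*a), 1:] ^ m dvd p" for m
  proof
    have b: "pcompose [:-a, 1:] [:0, inverse \<alpha>:] = smult (inverse \<alpha>) [:-(\<alpha>*a), 1:]"
      using assms by (simp add: pcompose_pCons field_simps)
    have c: "pcompose ([:-a, 1:] ^ m) [:0, inverse \<alpha>:] = smult (inverse \<alpha> ^ m) ([:-(\<alpha>*a), 1:] ^ m)"
      by (simp only: pcompose_power_left b smult_power)
    have r: "pcompose (pcompose p [:0, \<alpha>:]) [:0, inverse \<alpha>:] = p"
      using assms by (simp add: pcompose_assoc[symmetric] pcompose_pCons)
    assume "[:-a, 1:] ^ m dvd pcompose p [:0, \<alpha>:]"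
    from dvd_pcompose[OF this, of "[:0, inverse \<alpha>:]"] show "[:-(\<alpha>*a), 1:] ^ m dvd p"
      unfolding c r using assms by (simp add: smult_dvd_iff)
  next
    have b: "pcompose [:-(\<alpha>*a), 1:] [:0, \<alpha>:] = smult \<alpha> [:-a, 1:]"
      using assms by (simp add: pcompose_pCons field_simps)
    have c: "pcompose ([:-(\<alpha>*a), 1:] ^ m) [:0, \<alpha>:] = smult (\<alpha> ^ m) ([:-a, 1:] ^ m)"
      by (simp only: pcompose_power_left b smult_power)
    assume "[:-(\<alpha>*a), 1:] ^ m dvd p"
    from dvd_pcompose[OF this, of "[:0, \<alpha>:]"] show "[:-a, 1:] ^ m dvd pcompose p [:0, \<alpha>:]"
      unfolding c using assms by (simp add: smult_dvd_iff)
  qed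
  show ?thesis unfolding order_def key ..
qed

lemma det_on_scale:
  fixes M N :: "'a \<Rightarrow> 'a \<Rightarrow> 'b::comm_ring_1"
  assumes "\<And>a b. a \<in> S \<Longrightarrow> b \<in> S \<Longrightarrow> F b * N a b = G a * M a b"
  shows "prod F S * det_on S N = prod G S * det_on S M"
proof -
  have "prod F S * (of_int (sign p) * (\<Prod>a\<in>S. N a (p a)))
      = prod G S * (of_int (sign p) * (\<Prod>a\<in>S. M a (p a)))" if p: "p permutes S" for p
  proof -
    have "prod F S = (\<Prod>a\<in>S. F (p a))" using prod.permute[OF p, of F] by simp
    then have "prod F S * (\<Prod>a\<in>S. N a (p a)) = (\<Prod>a\<in>S. F (p a) * N a (p a))"
      by (simp add: prod.distrib)
    also have "\<dots> = (\<Prod>a\<in>S. G a * M a (p a))"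
      using assms permutes_in_image[OF p] by (intro prod.cong) auto
    also have "\<dots> = prod G S * (\<Prod>a\<in>S. M a (p a))" by (simp add: prod.distrib)
    finally show ?thesis by (metis (no_types) mult.left_commute)
  qed
  then show ?thesis unfolding det_on_def sum_distrib_left by (intro sum.cong) auto
qed

lemma pcompose_det_on:
  "pcompose (det_on S M) r = det_on S (\<lambda>a b. pcompose (M a b) r)"
  unfolding det_on_def by (simp add: pcompose_sum pcompose_mult pcompose_prod of_int_poly pcompose_smult)

lemma adj_nz:
  assumes "adj_tensor k E (i # is) \<noteq> 0" "uniform_hypergraph n k E"
  shows "length is = k - 1 \<and> distinct (i # is) \<and> set (i # is) \<in> E"
proof -
  have l: "length (i # is) = k" and e: "set (i # is) \<in> E"
    using assms(1) by (auto simp: adj_tensor_def split: if_splits)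
  then have "card (set (i # is)) = k" using assms(2) by (auto simp: uniform_hypergraph_def)
  then have "distinct (i # is)" using l by (intro card_distinct) simp
  then show ?thesis using l e by auto
qed

lemma cnt_V1:
  assumes "distinct (i # is)" "set (i # is) \<in> E" "\<forall>e\<in>E. card (e \<inter> V1) = 1"
  shows "length (filter (\<lambda>j. j \<in> V1) is) = (if i \<in> V1 then 0 else 1)"
proof -
  have c: "card (set (i # is) \<inter> V1) = 1" using assms by auto
  have "length (filter (\<lambda>j. j \<in> V1) is) = card (set is \<inter> V1)"
    using assms(1) by (simp add: distinct_length_filter Int_commute)
  moreover have "finite (set is \<inter> V1)" by simp
  ultimately show ?thesis using c assms(1)
    by (cases "i \<in> V1") (auto simp: Int_insert_left card_insert_if)
qed

lemma sum_count_list: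
  assumes "finite V1"
  shows "(\<Sum>j\<in>V1. count_list xs j) = length (filter (\<lambda>j. j \<in> V1) xs)"
proof (induction xs)
  case Nil then show ?case by simp
next
  case (Cons x xs)
  have "(\<Sum>j\<in>V1. count_list (x # xs) j) = (\<Sum>j\<in>V1. (if x = j then 1 else 0) + count_list xs j)"
    by (intro sum.cong) auto
  also have "\<dots> = (if x \<in> V1 then 1 else 0) + (\<Sum>j\<in>V1. count_list xs j)"
    using assms by (simp add: sum.distrib)
  finally show ?case using Cons by simp
qed

lemma prod_list_scale:
  "prod_list (map (\<lambda>j. if j \<in> V1 then \<alpha> * x j else x j) xs)
     = \<alpha> ^ length (filter (\<lambda>j. j \<in> V1) xs) * prod_list (map x (xs :: nat list))"
  for \<alpha> :: complex
  by (induction xs) auto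

lemma tensor_apply_scale:
  assumes "uniform_hypergraph n k E" "\<forall>e\<in>E. card (e \<inter> V1) = 1"
  shows "tensor_apply n k (adj_tensor k E) (\<lambda>j. if j \<in> V1 then \<alpha> * x j else x j) i
       = (if i \<in> V1 then 1 else \<alpha>) * tensor_apply n k (adj_tensor k E) x i"
  unfolding tensor_apply_def sum_distrib_left
proof (intro sum.cong refl)
  fix "is" assume "is \<in> index_lists n (k - 1)"
  show "adj_tensor k E (i # is) * prod_list (map (\<lambda>j. if j \<in> V1 then \<alpha> * x j else x j) is) =
         (if i \<in> V1 then 1 else \<alpha>) * (adj_tensor k E (i # is) * prod_list (map x is))"
  proof (cases "adj_tensor k E (i # is) = 0")
    case True then show ?thesis by simp
  next
    case False
    from adj_nz[OF False assms(1)] have "distinct (i # is)" "set (i # is) \<in> E" by auto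
    from cnt_V1[OF this assms(2)] show ?thesis
      by (simp add: prod_list_scale)
  qed
qed

lemma eig_scale:
  fixes \<alpha> lam :: complex
  assumes "uniform_hypergraph n k E" "\<forall>e\<in>E. card (e \<inter> V1) = 1"
    and "\<alpha> ^ k = 1" "k \<ge> 1" and "is_eigenvalue n k (adj_tensor k E) lam"
  shows "is_eigenvalue n k (adj_tensor k E) (\<alpha> * lam)"
proof -
  from assms(5) obtain x where x: "\<exists>j\<in>{1..n}. x j \<noteq> 0"
    "\<forall>i\<in>{1..n}. tensor_apply n k (adj_tensor k E) x i = lam * x i ^ (k - 1)"
    unfolding is_eigenvalue_def by blast
  have kk: "k = Suc (k - 1)" using assms(4) by simp
  have a1: "\<alpha> * \<alpha> ^ (k - 1) = 1" using assms(3) kk by (metis power_Suc)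
  then have a0: "\<alpha> \<noteq> 0" by auto
  define y where "y = (\<lambda>j. if j \<in> V1 then \<alpha> * x j else x j)"
  have "\<exists>j\<in>{1..n}. y j \<noteq> 0" using x(1) a0 by (auto simp: y_def)
  moreover have "\<forall>i\<in>{1..n}. tensor_apply n k (adj_tensor k E) y i = (\<alpha> * lam) * y i ^ (k - 1)"
  proof
    fix i assume i: "i \<in> {1..n}"
    have "tensor_apply n k (adj_tensor k E) y i = (if i \<in> V1 then 1 else \<alpha>) * (lam * x i ^ (k - 1))"
      unfolding y_def tensor_apply_scale[OF assms(1,2)] using x(2) i by simp
    also have "\<dots> = (\<alpha> * lam) * y i ^ (k - 1)"
    proof (cases "i \<in> V1")
      case True
      have h: "(\<alpha> * lam) * y i ^ (k - 1) = (\<alpha> * \<alpha> ^ (k - 1)) * (lam * x i ^ (k - 1))"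
        using True by (simp add: y_def power_mult_distrib)
      show ?thesis using True by (simp only: h a1 if_True)
    qed (simp add: y_def)
    finally show "tensor_apply n k (adj_tensor k E) y i = (\<alpha> * lam) * y i ^ (k - 1)" .
  qed
  ultimately show ?thesis unfolding is_eigenvalue_def by blast
qed

lemma mac_sel_props:
  assumes "a \<in> monomials n (n * (d - 1) + 1)" "d \<ge> 1"
  shows "mac_sel n d a \<in> {1..n} \<and> d \<le> a (mac_sel n d a)"
proof -
  have "\<exists>i. i \<in> {1..n} \<and> d \<le> a i"
  proof (rule ccontr)
    assume "\<not> ?thesis"
    then have "\<And>i. i \<in> {1..n} \<Longrightarrow> a i \<le> d - 1" by force
    then have "sum a {1..n} \<le> of_nat (card {1..n}) * (d - 1)" by (rule sum_bounded_above)
    then show False using assms(1) by (simp add: monomials_def)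
  qed
  then show ?thesis unfolding mac_sel_def by (rule LeastI_ex)
qed

lemma entry_scale:
  fixes \<alpha> :: complex
  assumes k3: "k \<ge> 3" and U: "uniform_hypergraph n k E" and V1: "V1 \<subseteq> {1..n}"
    and B: "\<forall>e\<in>E. card (e \<inter> V1) = 1" and al: "\<alpha> ^ k = 1"
    and a: "a \<in> monomials n (n * (k - 1 - 1) + 1)"
  shows "[:\<alpha> ^ sum b V1:] * pcompose (mac_entry n k (adj_tensor k E) a b) [:0, \<alpha>:]
       = [:\<alpha> * \<alpha> ^ sum a V1:] * mac_entry n k (adj_tensor k E) a b"
proof -
  define d where "d = k - 1"
  define i where "i = mac_sel n d a"
  define a' where "a' = a(i := a i - d)"
  define c where "c = tensor_coeff n k (adj_tensor k E) i (\<lambda>j. b j - a' j)"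
  have d2: "d \<ge> 2" and kd: "k = Suc d" using k3 by (auto simp: d_def)
  have i: "i \<in> {1..n}" "d \<le> a i" using mac_sel_props[of a n d] a d2 by (auto simp: i_def d_def)
  have fin: "finite V1" using V1 finite_subset by blast
  have mac: "mac_entry n k (adj_tensor k E) a b =
     (if a = b then [:0, 1:] else 0) - (if (\<forall>j. a' j \<le> b j) then [:c:] else 0)"
    by (simp add: mac_entry_def Let_def d_def i_def a'_def c_def)
  have key: "a \<noteq> b \<and> \<alpha> ^ sum b V1 = \<alpha> * \<alpha> ^ sum a V1"
    if le: "\<forall>j. a' j \<le> b j" and c0: "c \<noteq> 0"
  proof -
    from sum.not_neutral_contains_not_neutral[OF c0[unfolded c_def tensor_coeff_def]]
    obtain "is" where is1: "is \<in> index_lists n (k - 1)"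
      and is2: "(\<lambda>j. count_list is j) = (\<lambda>j. b j - a' j)"
      and is3: "adj_tensor k E (i # is) \<noteq> 0"
      by blast
    from adj_nz[OF is3 U] have L: "length is = d" and D: "distinct (i # is)" and S: "set (i # is) \<in> E"
      by (auto simp: d_def)
    have m: "length (filter (\<lambda>j. j \<in> V1) is) = (if i \<in> V1 then 0 else 1)"
      using cnt_V1[OF D S B] .
    have hb: "b j = a' j + count_list is j" for j using le[rule_format, of j] fun_cong[OF is2, of j] by simp
    have ha: "a j = a' j + (if j = i then d else 0)" for j using i(2) by (simp add: a'_def)
    have sb: "sum b V1 = sum a' V1 + (if i \<in> V1 then 0 else 1)"
      using hb fin by (simp add: sum.distrib sum_count_list m)
    have sa: "sum a V1 = sum a' V1 + (if i \<in> V1 then d else 0)"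
      using ha fin by (simp add: sum.distrib)
    have neq: "a \<noteq> b"
    proof
      assume "a = b"
      then have cj: "count_list is j = (if j = i then d else 0)" for j
        using fun_cong[OF is2, of j] ha[of j] by simp
      have "\<forall>j. j \<notin> set is"
      proof
        fix j show "j \<notin> set is"
        proof (cases "j = i")
          case True then show ?thesis using D by simp
        next
          case False then show ?thesis using cj[of j] count_list_0_iff by fastforce
        qed
      qed
      then have "is = []" by (cases "is") auto
      then show False using L d2 by simp
    qed
    have ak: "\<alpha> * \<alpha> ^ d = 1" using al kd by simp
    show ?thesis
    proof (cases "i \<in> V1")
      case True
      then show ?thesis using neq sb sa ak by (simp add: power_add)
    next
      case False
      then show ?thesis using neq sb sa by simp
    qed
  qed
  show ?thesis
  proof (cases "(\<forall>j. a' j \<le> b j) \<and> c \<noteq> 0")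
    case True
    with key have "a \<noteq> b" "\<alpha> ^ sum b V1 = \<alpha> * \<alpha> ^ sum a V1" by auto
    then show ?thesis unfolding mac using True by simp
  next
    case False
    then have mac2: "mac_entry n k (adj_tensor k E) a b = (if a = b then [:0, 1:] else 0)"
      unfolding mac by auto
    show ?thesis unfolding mac2 by (auto simp: pcompose_pCons)
  qed
qed

lemma const_pow_mult: "[:x:] ^ m * p = smult (x ^ m) p"
  by (induction m) (auto simp: algebra_simps)

lemma det_rel:
  fixes \<alpha> :: complex
  assumes k3: "k \<ge> 3" and U: "uniform_hypergraph n k E" and V1: "V1 \<subseteq> {1..n}"
    and B: "\<forall>e\<in>E. card (e \<inter> V1) = 1" and al: "\<alpha> ^ k = 1"
    and X: "X \<subseteq> monomials n (n * (k - 1 - 1) + 1)"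
  shows "det_on X (\<lambda>a b. pcompose (mac_entry n k (adj_tensor k E) a b) [:0, \<alpha>:])
       = smult (\<alpha> ^ card X) (det_on X (mac_entry n k (adj_tensor k E)))"
proof -
  have a0: "\<alpha> \<noteq> 0"
  proof
    assume "\<alpha> = 0" then have "\<alpha> ^ k = 0" using k3 by simp
    with al show False by simp
  qed
  define F where "F = (\<lambda>b. [:\<alpha> ^ sum b V1:])"
  define G where "G = (\<lambda>a. [:\<alpha> * \<alpha> ^ sum a V1:])"
  have h: "prod F X * det_on X (\<lambda>a b. pcompose (mac_entry n k (adj_tensor k E) a b) [:0, \<alpha>:])
      = prod G X * det_on X (mac_entry n k (adj_tensor k E))"
    unfolding F_def G_def
    by (rule det_on_scale) (use entry_scale[OF k3 U V1 B al] X in blast)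
  have G: "prod G X = [:\<alpha>:] ^ card X * prod F X"
  proof -
    have "prod G X = (\<Prod>a\<in>X. [:\<alpha>:] * F a)" unfolding G_def F_def
      by (intro prod.cong) auto
    then show ?thesis by (simp only: prod.distrib prod_constant)
  qed
  have F0: "prod F X \<noteq> 0"
  proof (cases "finite X")
    case True then show ?thesis using a0 by (simp add: F_def prod_zero_iff)
  qed simp
  have "prod F X * det_on X (\<lambda>a b. pcompose (mac_entry n k (adj_tensor k E) a b) [:0, \<alpha>:])
      = prod F X * ([:\<alpha>:] ^ card X * det_on X (mac_entry n k (adj_tensor k E)))"
    unfolding h G by (simp only: mult_ac)
  then have "det_on X (\<lambda>a b. pcompose (mac_entry n k (adj_tensor k E) a b) [:0, \<alpha>:])
      = [:\<alpha>:] ^ card X * det_on X (mac_entry n k (adj_tensor k E))"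
    using F0 by (simp only: mult_cancel_left simp_thms)
  then show ?thesis by (simp add: const_pow_mult)
qed

theorem proposition3p1:
  fixes n k :: nat and E :: "nat set set" and \<alpha> lam :: complex
  assumes "k \<ge> 3"
    and "uniform_hypergraph n k E"
    and "hm_bipartite n E"
    and "\<alpha> ^ k = 1"
  shows "(is_eigenvalue n k (adj_tensor k E) lam \<longleftrightarrow> is_eigenvalue n k (adj_tensor k E) (\<alpha> * lam))
       \<and> order lam (char_poly_tensor n k (adj_tensor k E))
           = order (\<alpha> * lam) (char_poly_tensor n k (adj_tensor k E))"
proof -
  obtain V1 where V1: "V1 \<subseteq> {1..n}" and B: "\<forall>e\<in>E. card (e \<inter> V1) = 1"
  proof (cases "E = {}")
    case True then show ?thesis using that[of "{}"] by simp
  next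
    case False
    then obtain V1 V2 where "V1 \<union> V2 = {1..n}" "\<forall>e\<in>E. card (e \<inter> V1) = 1"
      using assms(3) unfolding hm_bipartite_def by blast
    then show ?thesis using that[of V1] by blast
  qed
  have k1: "k \<ge> 1" using assms(1) by simp
  have a0: "\<alpha> \<noteq> 0"
  proof
    assume "\<alpha> = 0" then have "\<alpha> ^ k = 0" using k1 by simp
    with assms(4) show False by simp
  qed
  have eig: "is_eigenvalue n k (adj_tensor k E) lam \<longleftrightarrow> is_eigenvalue n k (adj_tensor k E) (\<alpha> * lam)"
  proof
    assume "is_eigenvalue n k (adj_tensor k E) lam"
    then show "is_eigenvalue n k (adj_tensor k E) (\<alpha> * lam)"
      by (rule eig_scale[OF assms(2) B assms(4) k1])
  next
    assume h: "is_eigenvalue n k (adj_tensor k E) (\<alpha> * lam)"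
    have ip: "inverse \<alpha> ^ k = 1" using assms(4) by (simp add: power_inverse)
    have e: "inverse \<alpha> * (\<alpha> * lam) = lam" using a0 by (simp add: field_simps)
    from eig_scale[OF assms(2) B ip k1 h] show "is_eigenvalue n k (adj_tensor k E) lam"
      unfolding e .
  qed
  define M where "M = mac_entry n k (adj_tensor k E)"
  define S where "S = monomials n (n * (k - 1 - 1) + 1)"
  define S' where "S' = {a\<in>S. \<not> mac_reduced n (k - 1) a}"
  define L where "L = [:0, \<alpha>:]"
  have chi: "char_poly_tensor n k (adj_tensor k E) = det_on S M div det_on S' M"
    unfolding char_poly_tensor_def Let_def M_def S_def S'_def ..
  have P: "pcompose (det_on S M) L = smult (\<alpha> ^ card S) (det_on S M)"
    unfolding pcompose_det_on M_def L_def S_def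
    by (rule det_rel[OF assms(1,2) V1 B assms(4)]) simp
  have Q: "pcompose (det_on S' M) L = smult (\<alpha> ^ card S') (det_on S' M)"
    unfolding pcompose_det_on M_def L_def S'_def
    by (rule det_rel[OF assms(1,2) V1 B assms(4)]) (auto simp: S_def)
  define c where "c = \<alpha> ^ card S * inverse (\<alpha> ^ card S')"
  have c0: "c \<noteq> 0" using a0 by (simp add: c_def)
  have comp: "pcompose (char_poly_tensor n k (adj_tensor k E)) L = smult c (char_poly_tensor n k (adj_tensor k E))"
    unfolding chi L_def pcompose_lin_div[OF a0]
    unfolding L_def[symmetric] P Q
    by (simp add: div_smult_left div_smult_right c_def mult.commute)
  have "order lam (char_poly_tensor n k (adj_tensor k E))
      = order lam (smult c (char_poly_tensor n k (adj_tensor k E)))"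
    using order_smult[OF c0] by simp
  also have "\<dots> = order (\<alpha> * lam) (char_poly_tensor n k (adj_tensor k E))"
    unfolding comp[symmetric] L_def by (rule order_pcompose_lin[OF a0])
  finally show ?thesis using eig by simp
qed

end
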